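(* Let $\lambda$ be a strict partition with inner corner contents $x_0,\dots,x_m$ and outer corner contents $y_1,\dots,y_m$, let $0\le i\le m$, and let $\lambda^+=\lambda\cup\{\square\}$ be a strict partition obtained from $\lambda$ by adding one box $\square$ with $c_\square=x_i$. If $i=0$, then $$\frac{H_\lambda}{H_{\lambda^+}}=\frac{\prod_{1\le j\le m}\bigl(\binom{x_0}{2}-\binom{y_j}{2}\bigr)}{\prod_{1\le j\le m}\bigl(\binom{x_0}{2}-\binom{x_j}{2}\bigr)}.$$ If $1\le i\le m$, then $$\frac{H_\lambda}{H_{\lambda^+}}=\frac12\cdot\frac{\prod_{1\le j\le m}\bigl(\binom{x_i}{2}-\binom{y_j}{2}\bigr)}{\prod_{0\le j\le m,\ j\ne i}\bigl(\binom{x_i}{2}-\binom{x_j}{2}\bigr)}.$$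
   Context: A strict partition is a finite strictly decreasing sequence of positive integers $\lambda=(\lambda_1>\cdots>\lambda_\ell)$ (the empty sequence is allowed); $|\lambda|=\sum_i\lambda_i$, $\ell(\lambda)=\ell$, and $\lambda_i=0$ for $i>\ell(\lambda)$. The (shifted Young) diagram of $\lambda$ is the set of boxes $(i,j)$ with $1\le i\le\ell(\lambda)$, $i+1\le j\le i+\lambda_i$ (row $i$, column $j$); $\lambda$ is identified with its diagram. The content of $\square=(i,j)$ is $c_\square=j-i$. The hook length $h_\square$ of $\square=(i,j)\in\lambda$ is the number of boxes of $\lambda$ in row $i$ strictly to the right of $\square$, plus the number of boxes $(i',j)\in\lambda$ with $i'>i$, plus $1$, plus $\lambda_j$; $H_\lambda=\prod_{\square\in\lambda}h_\square$. Corners: an outer corner of $\lambda$ is a box of $\lambda$ whose removal leaves the diagram of a strict partition. Let $(\alpha_1,\beta_1),\dots,(\alpha_m,\beta_m)$ be the outer corners with $\alpha_1>\cdots>\alpha_m$, and $y_j=\beta_j-\alpha_j$ ($1\le j\le m$) their contents. Set $\alpha_{m+1}=0$, $\beta_0=\ell(\lambda)+1$, and $x_i=\beta_i-\alpha_{i+1}$ for $0\le i\le m$ (contents of the inner corners). One has $x_0=1\le y_1<x_1<y_2<\cdots<y_m<x_m$. *)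

theory Defs
  imports Complex_Main
begin

text \<open>A strict partition is represented by the list of its parts
  (lambda_1 > ... > lambda_l > 0).  Rows and columns are 1-indexed.\<close>

definition strict_partition :: "nat list \<Rightarrow> bool" where
  "strict_partition lam \<longleftrightarrow> sorted_wrt (>) lam \<and> (\<forall>x\<in>set lam. 0 < x)"

definition part :: "nat list \<Rightarrow> nat \<Rightarrow> nat" where
  "part lam i = (if 1 \<le> i \<and> i \<le> length lam then lam ! (i - 1) else 0)"

text \<open>Shifted Young diagram.\<close>
definition diagram :: "nat list \<Rightarrow> (nat \<times> nat) set" where
  "diagram lam = {(i, j). 1 \<le> i \<and> i \<le> length lam \<and> i + 1 \<le> j \<and> j \<le> i + part lam i}"

definition content :: "nat \<times> nat \<Rightarrow> int" where
  "content b = int (snd b) - int (fst b)"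

definition hook :: "nat list \<Rightarrow> nat \<times> nat \<Rightarrow> nat" where
  "hook lam b = (case b of (i, j) \<Rightarrow>
      card {j'. (i, j') \<in> diagram lam \<and> j' > j}
    + card {i'. (i', j) \<in> diagram lam \<and> i' > i} + 1 + part lam j)"

definition hook_product :: "nat list \<Rightarrow> nat" where
  "hook_product lam = (\<Prod>b\<in>diagram lam. hook lam b)"

definition outer_corners :: "nat list \<Rightarrow> (nat \<times> nat) set" where
  "outer_corners lam = {b \<in> diagram lam.
      \<exists>mu. strict_partition mu \<and> diagram mu = diagram lam - {b}}"

text \<open>Outer corners listed with decreasing row index alpha_1 > ... > alpha_m
  (each row contains at most one outer corner, its column is determined by the row).\<close>
definition corner_list :: "nat list \<Rightarrow> (nat \<times> nat) list" where
  "corner_list lam = map (\<lambda>r. (r, THE c. (r, c) \<in> outer_corners lam))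
      (rev (sorted_list_of_set (fst ` outer_corners lam)))"

definition ncorners :: "nat list \<Rightarrow> nat" where
  "ncorners lam = length (corner_list lam)"

definition alpha :: "nat list \<Rightarrow> nat \<Rightarrow> int" where
  "alpha lam j = (if 1 \<le> j \<and> j \<le> ncorners lam then int (fst (corner_list lam ! (j - 1))) else 0)"

definition beta :: "nat list \<Rightarrow> nat \<Rightarrow> int" where
  "beta lam j = (if j = 0 then int (length lam) + 1
                 else int (snd (corner_list lam ! (j - 1))))"

text \<open>Contents of outer corners y_j (1 <= j <= m) and inner corners x_i (0 <= i <= m).\<close>
definition ycont :: "nat list \<Rightarrow> nat \<Rightarrow> int" where
  "ycont lam j = beta lam j - alpha lam j"

definition xcont :: "nat list \<Rightarrow> nat \<Rightarrow> int" where
  "xcont lam i = beta lam i - alpha lam (i + 1)"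

end

theory Submission
  imports Defs
begin


lemma diagram_iff: "(i,j) \<in> diagram lam \<longleftrightarrow> 1 \<le> i \<and> i+1 \<le> j \<and> j \<le> i + part lam i"
  unfolding diagram_def part_def by auto

lemma part_gt: "length lam < i \<Longrightarrow> part lam i = 0"
  unfolding part_def by auto
lemma part_0[simp]: "part lam 0 = 0"
  unfolding part_def by auto

lemma hook_part: "hook lam (i,c) = card {j'. 1 \<le> i \<and> i+1 \<le> j' \<and> j' \<le> i + part lam i \<and> j' > c}
   + card {i'. 1 \<le> i' \<and> i'+1 \<le> c \<and> c \<le> i' + part lam i' \<and> i' > i} + 1 + part lam c"
  unfolding hook_def by (simp add: diagram_iff)

context
  fixes lam assumes sp: "strict_partition lam"
begin

lemma sp_pos: "1 \<le> i \<Longrightarrow> i \<le> length lam \<Longrightarrow> part lam i > 0"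
  using sp unfolding strict_partition_def part_def by auto

lemma sp_dec: "1 \<le> i \<Longrightarrow> i < j \<Longrightarrow> j \<le> length lam \<Longrightarrow> part lam j < part lam i"
  using sp sorted_wrt_nth_less[of "(>)" lam "i-1" "j-1"] unfolding strict_partition_def part_def by auto

lemma sp_gap: assumes "1 \<le> i" "i \<le> j" "j \<le> length lam + 1" shows "part lam j + (j - i) \<le> part lam i"
  using assms(2,3)
proof (induction j rule: dec_induct)
  case base then show ?case by simp
next
  case (step j)
  have "part lam (Suc j) < part lam j"
  proof (cases "Suc j \<le> length lam")
    case True then show ?thesis using sp_dec[of j "Suc j"] step assms(1) by auto
  next
    case False then show ?thesis using sp_pos[of j] part_gt[of lam "Suc j"] step assms(1) by auto
  qed
  then show ?case using step by auto
qed

lemma sp_inj: assumes "part lam i = part lam j" "part lam i > 0" shows "i = j"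
proof -
  have "i \<le> length lam" "j \<le> length lam" "i \<noteq> 0" "j \<noteq> 0"
    using assms part_gt[of lam i] part_gt[of lam j] by (auto intro: ccontr)
  then show ?thesis using sp_dec[of i j] sp_dec[of j i] assms by (cases i j rule: linorder_cases) auto
qed

lemma sp_set: "set lam = part lam ` {1..length lam}"
proof
  show "set lam \<subseteq> part lam ` {1..length lam}"
  proof
    fix x assume "x \<in> set lam"
    then obtain k where k: "k < length lam" "x = lam ! k" by (auto simp: in_set_conv_nth)
    then have "x = part lam (Suc k)" by (simp add: part_def)
    then show "x \<in> part lam ` {1..length lam}" using k by (intro image_eqI[of _ _ "Suc k"]) auto
  qed
  show "part lam ` {1..length lam} \<subseteq> set lam" by (auto simp: part_def)
qed

end


lemma diagram_Sigma: "diagram lam = Sigma {1..length lam} (\<lambda>i. {i+1..i+part lam i})"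
  by (auto simp: diagram_iff part_gt intro: ccontr)

lemma finite_diagram[simp]: "finite (diagram lam)"
  unfolding diagram_Sigma by auto

lemma hook_pos: "hook lam b > 0"
  by (cases b) (simp add: hook_def)

lemma hook_product_pos: "hook_product lam > 0"
  unfolding hook_product_def using hook_pos by (simp add: prod_pos)

lemma strict_snoc:
  assumes "strict_partition (lam @ [a])"
  shows "strict_partition lam" "a > 0" "\<forall>q\<in>set lam. a < q"
  using assms unfolding strict_partition_def by (auto simp: sorted_wrt_append)

lemma part_snoc: "part (lam @ [a]) i = (if i = Suc (length lam) then a else part lam i)"
  unfolding part_def by (auto simp: nth_append)

lemma prod_times: "(\<Prod>b\<in>A \<times> B. f b) = (\<Prod>i\<in>A. \<Prod>c\<in>B. f (i,c))"
  by (simp add: prod.cartesian_product)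

lemma row_aux: "k \<le> v \<Longrightarrow> (\<Prod>t\<in>{1..k}. v - t + 1) * (v - k) = (\<Prod>t\<in>{0..k}. (v::nat) - t)"
proof (induction k)
  case 0 then show ?case by simp
next
  case (Suc k)
  have "(\<Prod>t\<in>{1..Suc k}. v - t + 1) * (v - Suc k) = ((\<Prod>t\<in>{1..k}. v - t + 1) * (v - k)) * (v - Suc k)"
    using Suc.prems by (simp add: Suc_diff_Suc)
  also have "\<dots> = (\<Prod>t\<in>{0..k}. v - t) * (v - Suc k)" using Suc by simp
  also have "\<dots> = (\<Prod>t\<in>{0..Suc k}. v - t)" by simp
  finally show ?case .
qed

lemma row_ratio:
  assumes "a \<le> v"
  shows "(\<Prod>t\<in>{0..a}. v - t + (if 0 < t then 1 else 0) + (if t = 0 then a else 0)) * (v - a)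
       = (\<Prod>t\<in>{0..a}. (v::nat) - t) * (v + a)"
proof -
  have "(\<Prod>t\<in>{0..a}. v - t + (if 0 < t then 1 else 0) + (if t = 0 then a else 0))
      = (v + a) * (\<Prod>t\<in>{Suc 0..a}. v - t + (if 0 < t then 1 else 0) + (if t = 0 then a else 0))"
    by (simp add: prod.atLeast_Suc_atMost)
  also have "(\<Prod>t\<in>{Suc 0..a}. v - t + (if 0 < t then 1 else 0) + (if t = 0 then a else 0))
     = (\<Prod>t\<in>{1..a}. v - t + 1)" by (rule prod.cong) auto
  finally show ?thesis using row_aux[OF assms] by (simp add: mult_ac)
qed

lemma hook_step:
  assumes sL: "strict_partition (lam @ [a])"
  shows "hook_product (lam @ [a]) * (\<Prod>i\<in>{1..length lam}. part lam i - a)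
       = hook_product lam * fact a * (\<Prod>i\<in>{1..length lam}. part lam i + a)"
proof -
  define L where "L = lam @ [a]"
  define n where "n = Suc (length lam)"
  define p where "p = part lam"
  have sl: "strict_partition lam" and apos: "a > 0" using strict_snoc[OF sL] by auto
  have pL: "part L i = (if i = n then a else p i)" for i
    unfolding L_def n_def p_def by (rule part_snoc)
  have pn: "p n = 0" unfolding p_def n_def by (simp add: part_gt)
  have big: "p i \<ge> a + (n - i)" if "1 \<le> i" "i \<le> length lam" for i
  proof -
    have "part L n + (n - i) \<le> part L i"
      using sp_gap[OF sL, of i n] that unfolding L_def n_def by simp
    then show ?thesis using pL that unfolding n_def by auto
  qed
  define D where "D = diagram lam"
  define R where "R = (\<lambda>c. (n,c)) ` {n+1..n+a}"
  define D2 where "D2 = {1..length lam} \<times> {n..n+a}"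
  have dL: "diagram L = D \<union> R"
  proof (rule set_eqI)
    fix x :: "nat \<times> nat"
    obtain i c where x: "x = (i,c)" by force
    show "x \<in> diagram L \<longleftrightarrow> x \<in> D \<union> R"
      unfolding x D_def R_def using pn n_def by (cases "i = n") (auto simp: diagram_iff pL p_def)
  qed
  have disj: "D \<inter> R = {}" using pn unfolding D_def R_def p_def by (auto simp: diagram_iff)
  have finR: "finite R" unfolding R_def by simp
  have hR: "hook L (n,c) = n + a + 1 - c" if "c \<in> {n+1..n+a}" for c
  proof -
    have "{j'. 1 \<le> n \<and> n+1 \<le> j' \<and> j' \<le> n + part L n \<and> j' > c} = {c+1..n+a}"
      using that by (auto simp: pL n_def)
    moreover have "card {i'. 1 \<le> i' \<and> i'+1 \<le> c \<and> c \<le> i' + part L i' \<and> i' > n} = 0"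
    proof -
      have "{i'. 1 \<le> i' \<and> i'+1 \<le> c \<and> c \<le> i' + part L i' \<and> i' > n} = {}"
        using that by (auto simp: pL p_def part_gt n_def)
      then show ?thesis by (metis card.empty)
    qed
    moreover have "part L c = 0" using that by (auto simp: L_def part_gt n_def)
    ultimately show ?thesis using that unfolding hook_part by (simp add: Suc_diff_le)
  qed
  have prodR: "(\<Prod>b\<in>R. hook L b) = fact a"
  proof -
    have "(\<Prod>b\<in>R. hook L b) = (\<Prod>c\<in>{n+1..n+a}. hook L (n,c))"
      unfolding R_def by (subst prod.reindex) (auto simp: inj_on_def)
    also have "\<dots> = (\<Prod>c\<in>{n+1..n+a}. n + a + 1 - c)" by (rule prod.cong) (auto simp: hR)
    also have "\<dots> = (\<Prod>k\<in>{1..a}. k)"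
      by (rule prod.reindex_bij_witness[where i="\<lambda>k. n + a + 1 - k" and j="\<lambda>c. n + a + 1 - c"]) auto
    also have "\<dots> = fact a" by (simp add: fact_prod)
    finally show ?thesis .
  qed
  have hD: "hook L (i,c) = hook lam (i,c) + (if n < c \<and> c \<le> n+a then 1 else 0) + (if c = n then a else 0)"
    if "(i,c) \<in> D" for i c
  proof -
    have i: "1 \<le> i" "i \<le> length lam" using that unfolding D_def by (auto simp: diagram_iff p_def part_gt intro: ccontr)
    have arm: "{j'. 1 \<le> i \<and> i+1 \<le> j' \<and> j' \<le> i + part L i \<and> j' > c} = {j'. 1 \<le> i \<and> i+1 \<le> j' \<and> j' \<le> i + part lam i \<and> j' > c}"
      using i by (auto simp: pL p_def n_def)
    have leg: "{i'. 1 \<le> i' \<and> i'+1 \<le> c \<and> c \<le> i' + part L i' \<and> i' > i}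
       = {i'. 1 \<le> i' \<and> i'+1 \<le> c \<and> c \<le> i' + part lam i' \<and> i' > i} \<union> (if n < c \<and> c \<le> n+a then {n} else {})"
      using i by (auto simp: pL p_def n_def split: if_splits) (use pn p_def n_def in auto)
    have fin: "finite {i'. 1 \<le> i' \<and> i'+1 \<le> c \<and> c \<le> i' + part lam i' \<and> i' > i}"
      by (rule finite_subset[of _ "{..c}"]) auto
    have nin: "n \<notin> {i'. 1 \<le> i' \<and> i'+1 \<le> c \<and> c \<le> i' + part lam i' \<and> i' > i}"
      using pn by (auto simp: p_def)
    have "card {i'. 1 \<le> i' \<and> i'+1 \<le> c \<and> c \<le> i' + part L i' \<and> i' > i}
        = card {i'. 1 \<le> i' \<and> i'+1 \<le> c \<and> c \<le> i' + part lam i' \<and> i' > i} + (if n < c \<and> c \<le> n+a then 1 else 0)"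
      unfolding leg using fin nin by auto
    moreover have "part L c = part lam c + (if c = n then a else 0)" using pn by (simp add: pL p_def)
    ultimately show ?thesis unfolding hook_part arm by simp
  qed
  have h2: "hook lam (i,c) = p i + n - c" if "1 \<le> i" "i \<le> length lam" "n \<le> c" "c \<le> n + a" for i c
  proof -
    have b: "p i \<ge> a + (n - i)" using big that by auto
    have "{j'. 1 \<le> i \<and> i+1 \<le> j' \<and> j' \<le> i + part lam i \<and> j' > c} = {c+1..i + p i}"
      using that by (auto simp: p_def n_def)
    moreover have "{i'. 1 \<le> i' \<and> i'+1 \<le> c \<and> c \<le> i' + part lam i' \<and> i' > i} = {i+1..length lam}"
    proof (rule set_eqI, rule iffI)
      fix x assume x: "x \<in> {i'. 1 \<le> i' \<and> i'+1 \<le> c \<and> c \<le> i' + part lam i' \<and> i' > i}"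
      then have "x \<le> length lam" using part_gt[of lam x] by (cases "x \<le> length lam") auto
      then show "x \<in> {i+1..length lam}" using x by auto
    next
      fix x assume x: "x \<in> {i+1..length lam}"
      then have "p x \<ge> a + (n - x)" using big by auto
      then show "x \<in> {i'. 1 \<le> i' \<and> i'+1 \<le> c \<and> c \<le> i' + part lam i' \<and> i' > i}"
        using x that by (auto simp: p_def n_def)
    qed
    moreover have "part lam c = 0" using that by (auto simp: part_gt n_def)
    ultimately show ?thesis using that b by (simp add: hook_part p_def n_def)
  qed
  have D2D: "D2 \<subseteq> D"
  proof
    fix x assume "x \<in> D2"
    then obtain i c where x: "x = (i,c)" "1 \<le> i" "i \<le> length lam" "n \<le> c" "c \<le> n + a" unfolding D2_def by auto
    then show "x \<in> D" using big[of i] unfolding D_def by (auto simp: diagram_iff p_def n_def)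
  qed
  have finD: "finite D" unfolding D_def by simp
  have eqo: "(\<Prod>b\<in>D - D2. hook L b) = (\<Prod>b\<in>D - D2. hook lam b)"
  proof (rule prod.cong[OF refl])
    fix b assume b: "b \<in> D - D2"
    obtain i c where bc: "b = (i,c)" by force
    have i: "1 \<le> i" "i \<le> length lam" using b bc unfolding D_def by (auto simp: diagram_iff p_def part_gt intro: ccontr)
    then have "\<not> (n \<le> c \<and> c \<le> n + a)" using b bc unfolding D2_def by auto
    then show "hook L b = hook lam b" using hD[of i c] b bc by auto
  qed
  have rowL: "(\<Prod>c\<in>{n..n+a}. hook L (i,c)) * (p i - a) = (\<Prod>c\<in>{n..n+a}. hook lam (i,c)) * (p i + a)"
    if "i \<in> {1..length lam}" for i
  proof -
    have bi: "p i \<ge> a + (n - i)" using big that by auto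
    have "(\<Prod>c\<in>{n..n+a}. hook L (i,c)) = (\<Prod>c\<in>{n..n+a}. p i + n - c + (if n < c \<and> c \<le> n+a then 1 else 0) + (if c = n then a else 0))"
    proof (rule prod.cong[OF refl])
      fix c assume c: "c \<in> {n..n+a}"
      have "(i,c) \<in> D" using D2D that c unfolding D2_def by auto
      then show "hook L (i,c) = p i + n - c + (if n < c \<and> c \<le> n+a then 1 else 0) + (if c = n then a else 0)"
        using hD[of i c] h2[of i c] that c by auto
    qed
    also have "\<dots> = (\<Prod>t\<in>{0..a}. p i - t + (if 0 < t then 1 else 0) + (if t = 0 then a else 0))"
      using prod.shift_bounds_cl_nat_ivl[of "\<lambda>c. p i + n - c + (if n < c \<and> c \<le> n+a then 1 else 0) + (if c = n then a else 0)" 0 n a]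
      by (simp add: add.commute)
    finally have 1: "(\<Prod>c\<in>{n..n+a}. hook L (i,c)) = (\<Prod>t\<in>{0..a}. p i - t + (if 0 < t then 1 else 0) + (if t = 0 then a else 0))" .
    have "(\<Prod>c\<in>{n..n+a}. hook lam (i,c)) = (\<Prod>c\<in>{n..n+a}. p i + n - c)"
      by (rule prod.cong[OF refl]) (use h2 that in auto)
    also have "\<dots> = (\<Prod>t\<in>{0..a}. p i - t)"
      using prod.shift_bounds_cl_nat_ivl[of "\<lambda>c. p i + n - c" 0 n a] by (simp add: add.commute)
    finally have 2: "(\<Prod>c\<in>{n..n+a}. hook lam (i,c)) = (\<Prod>t\<in>{0..a}. p i - t)" .
    show ?thesis unfolding 1 2 using row_ratio[of a "p i"] bi by simp
  qed
  have prod2: "(\<Prod>b\<in>D2. hook L b) * (\<Prod>i\<in>{1..length lam}. p i - a) = (\<Prod>b\<in>D2. hook lam b) * (\<Prod>i\<in>{1..length lam}. p i + a)"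
  proof -
    have "(\<Prod>b\<in>D2. hook L b) * (\<Prod>i\<in>{1..length lam}. p i - a) = (\<Prod>i\<in>{1..length lam}. (\<Prod>c\<in>{n..n+a}. hook L (i,c)) * (p i - a))"
      unfolding D2_def prod_times prod.distrib by simp
    also have "\<dots> = (\<Prod>i\<in>{1..length lam}. (\<Prod>c\<in>{n..n+a}. hook lam (i,c)) * (p i + a))"
      by (rule prod.cong[OF refl]) (rule rowL)
    also have "\<dots> = (\<Prod>b\<in>D2. hook lam b) * (\<Prod>i\<in>{1..length lam}. p i + a)"
      unfolding D2_def prod_times prod.distrib by simp
    finally show ?thesis .
  qed
  have "hook_product L = (\<Prod>b\<in>D. hook L b) * (\<Prod>b\<in>R. hook L b)"
    unfolding hook_product_def dL using finD finR disj by (rule prod.union_disjoint)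
  also have "(\<Prod>b\<in>D. hook L b) = (\<Prod>b\<in>D - D2. hook lam b) * (\<Prod>b\<in>D2. hook L b)"
    using prod.subset_diff[OF D2D finD, of "hook L"] eqo by simp
  finally have eL: "hook_product L = (\<Prod>b\<in>D - D2. hook lam b) * (\<Prod>b\<in>D2. hook L b) * fact a"
    using prodR by simp
  have el: "hook_product lam = (\<Prod>b\<in>D - D2. hook lam b) * (\<Prod>b\<in>D2. hook lam b)"
    unfolding hook_product_def D_def[symmetric] using prod.subset_diff[OF D2D finD] .
  show ?thesis unfolding L_def[symmetric] p_def[symmetric] eL el
    using prod2 by (simp add: mult_ac)
qed



definition hh :: "nat \<Rightarrow> nat \<Rightarrow> real" where
  "hh p q = (real p + real q) / (real p - real q)"

definition FF :: "nat set \<Rightarrow> real" where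
  "FF S = (\<Prod>p\<in>S. fact p * (\<Prod>q\<in>{q\<in>S. q < p}. hh p q))"

lemma FF_insert:
  assumes "finite S" "a \<notin> S"
  shows "FF (insert a S) = fact a * (\<Prod>q\<in>S. (real a + real q) / \<bar>real a - real q\<bar>) * FF S"
proof -
  have e1: "{q\<in>insert a S. q < a} = {q\<in>S. q < a}" by auto
  have e2: "(\<Prod>q\<in>{q\<in>insert a S. q < p}. hh p q) = (if a < p then hh p a else 1) * (\<Prod>q\<in>{q\<in>S. q < p}. hh p q)"
    if "p \<in> S" for p
  proof (cases "a < p")
    case True
    then have "{q\<in>insert a S. q < p} = insert a {q\<in>S. q < p}" by auto
    then show ?thesis using True assms by simp
  next
    case False
    then have "{q\<in>insert a S. q < p} = {q\<in>S. q < p}" by auto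
    then show ?thesis using False by simp
  qed
  have "FF (insert a S) = (fact a * (\<Prod>q\<in>{q\<in>S. q < a}. hh a q)) *
      (\<Prod>p\<in>S. (if a < p then hh p a else 1) * (fact p * (\<Prod>q\<in>{q\<in>S. q < p}. hh p q)))"
  proof -
    have "FF (insert a S) = (fact a * (\<Prod>q\<in>{q\<in>insert a S. q < a}. hh a q)) *
      (\<Prod>p\<in>S. fact p * (\<Prod>q\<in>{q\<in>insert a S. q < p}. hh p q))"
      unfolding FF_def using assms by (rule prod.insert)
    also have "(\<Prod>p\<in>S. fact p * (\<Prod>q\<in>{q\<in>insert a S. q < p}. hh p q))
      = (\<Prod>p\<in>S. (if a < p then hh p a else 1) * (fact p * (\<Prod>q\<in>{q\<in>S. q < p}. hh p q)))"
    proof (rule prod.cong[OF refl])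
      fix p assume "p \<in> S"
      show "fact p * (\<Prod>q\<in>{q\<in>insert a S. q < p}. hh p q) = (if a < p then hh p a else 1) * (fact p * (\<Prod>q\<in>{q\<in>S. q < p}. hh p q))"
        by (simp only: e2[OF \<open>p \<in> S\<close>]) (simp add: mult_ac)
    qed
    finally show ?thesis unfolding e1 .
  qed
  also have "\<dots> = fact a * ((\<Prod>q\<in>{q\<in>S. q < a}. hh a q) * (\<Prod>p\<in>{p\<in>S. a < p}. hh p a)) * FF S"
    unfolding prod.distrib FF_def using assms by (simp add: prod.inter_filter[symmetric] mult_ac)
  also have "(\<Prod>q\<in>{q\<in>S. q < a}. hh a q) * (\<Prod>p\<in>{p\<in>S. a < p}. hh p a)
      = (\<Prod>q\<in>S. if q < a then hh a q else hh q a)"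
  proof -
    have "{p\<in>S. a < p} = {q\<in>S. \<not> q < a}" using assms by (auto simp: linorder_neq_iff) (metis linorder_neqE_nat)
    then show ?thesis using assms(1) by (simp add: prod.If_cases Int_def)
  qed
  also have "\<dots> = (\<Prod>q\<in>S. (real a + real q) / \<bar>real a - real q\<bar>)"
  proof (rule prod.cong[OF refl])
    fix q assume "q \<in> S"
    then have "q \<noteq> a" using assms by auto
    then show "(if q < a then hh a q else hh q a) = (real a + real q) / \<bar>real a - real q\<bar>"
      unfolding hh_def by (cases "q < a") (auto simp: abs_if add.commute)
  qed
  finally show ?thesis .
qed

lemma prod_parts:
  assumes "strict_partition lam"
  shows "(\<Prod>i\<in>{1..length lam}. f (part lam i)) = (\<Prod>q\<in>set lam. f q)"
proof -
  have "inj_on (part lam) {1..length lam}"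
    using sp_inj[OF assms] sp_pos[OF assms] by (auto simp: inj_on_def)
  then show ?thesis unfolding sp_set[OF assms] by (simp add: prod.reindex)
qed

lemma hook_closed: "strict_partition lam \<Longrightarrow> real (hook_product lam) = FF (set lam)"
proof (induction lam rule: rev_induct)
  case Nil
  then show ?case by (simp add: hook_product_def FF_def diagram_Sigma)
next
  case (snoc a lam)
  have sl: "strict_partition lam" and ap: "a > 0" and lt: "\<forall>q\<in>set lam. a < q"
    using strict_snoc[OF snoc.prems] by auto
  have pa: "part lam i > a" if "i \<in> {1..length lam}" for i
    using lt sp_set[OF sl] that by auto
  have st: "hook_product (lam @ [a]) * (\<Prod>i\<in>{1..length lam}. part lam i - a)
       = hook_product lam * fact a * (\<Prod>i\<in>{1..length lam}. part lam i + a)"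
    by (rule hook_step[OF snoc.prems])
  have "real (hook_product (lam @ [a])) * (\<Prod>q\<in>set lam. real q - real a)
      = real (hook_product lam) * fact a * (\<Prod>q\<in>set lam. real q + real a)"
  proof -
    have "real (hook_product (lam @ [a]) * (\<Prod>i\<in>{1..length lam}. part lam i - a))
      = real (hook_product lam * fact a * (\<Prod>i\<in>{1..length lam}. part lam i + a))"
      using st by simp
    moreover have "(\<Prod>i\<in>{1..length lam}. real (part lam i - a)) = (\<Prod>i\<in>{1..length lam}. real (part lam i) - real a)"
    proof (rule prod.cong[OF refl])
      fix i assume "i \<in> {1..length lam}"
      then show "real (part lam i - a) = real (part lam i) - real a" using pa[of i] by (simp add: of_nat_diff)
    qed
    ultimately show ?thesis
      using prod_parts[OF sl, of "\<lambda>q. real q - real a"] prod_parts[OF sl, of "\<lambda>q. real q + real a"]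
      by (simp add: of_nat_prod)
  qed
  moreover have nz: "(\<Prod>q\<in>set lam. real q - real a) \<noteq> 0" using lt by (auto simp: prod_zero_iff)
  ultimately have "real (hook_product (lam @ [a])) = real (hook_product lam) * fact a * (\<Prod>q\<in>set lam. real q + real a) / (\<Prod>q\<in>set lam. real q - real a)"
    by (simp add: field_simps)
  also have "\<dots> = fact a * (\<Prod>q\<in>set lam. (real a + real q) / \<bar>real a - real q\<bar>) * FF (set lam)"
  proof -
    have "(\<Prod>q\<in>set lam. (real a + real q) / \<bar>real a - real q\<bar>) = (\<Prod>q\<in>set lam. real q + real a) / (\<Prod>q\<in>set lam. real q - real a)"
      unfolding prod_dividef[symmetric] by (rule prod.cong[OF refl]) (use lt in \<open>auto simp: abs_if add.commute\<close>)
    then show ?thesis using snoc.IH[OF sl] by simp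
  qed
  also have "\<dots> = FF (set (lam @ [a]))"
    using FF_insert[of "set lam" a] lt by auto
  finally show ?case .
qed



lemma row_set: "{j. (i,j) \<in> diagram lam} = (if 1 \<le> i then {i+1..i+part lam i} else {})"
  by (auto simp: diagram_iff)

lemma row_card: "card {j. (i,j) \<in> diagram lam} = part lam i"
  unfolding row_set by (auto simp: part_def)

lemma strict_iff: "strict_partition mu \<longleftrightarrow>
   (\<forall>k. 1 \<le> k \<and> k \<le> length mu \<longrightarrow> 0 < part mu k) \<and>
   (\<forall>k. 1 \<le> k \<and> k < length mu \<longrightarrow> part mu (Suc k) < part mu k)"
proof -
  have t: "transp ((>) :: nat \<Rightarrow> nat \<Rightarrow> bool)" by (auto simp: transp_def)
  have "strict_partition mu \<longleftrightarrow> (\<forall>i. Suc i < length mu \<longrightarrow> mu ! i > mu ! Suc i) \<and> (\<forall>i<length mu. 0 < mu ! i)"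
    unfolding strict_partition_def sorted_wrt_iff_nth_Suc_transp[OF t] by (auto simp: all_set_conv_all_nth)
  moreover have a: "(\<forall>i. Suc i < length mu \<longrightarrow> mu ! i > mu ! Suc i) \<longleftrightarrow> (\<forall>k. 1 \<le> k \<and> k < length mu \<longrightarrow> part mu (Suc k) < part mu k)"
    proof
      assume H: "\<forall>i. Suc i < length mu \<longrightarrow> mu ! i > mu ! Suc i"
      show "\<forall>k. 1 \<le> k \<and> k < length mu \<longrightarrow> part mu (Suc k) < part mu k"
      proof (intro allI impI)
        fix k assume k: "1 \<le> k \<and> k < length mu"
        then show "part mu (Suc k) < part mu k" using H[rule_format, of "k-1"] by (auto simp: part_def)
      qed
    next
      assume H: "\<forall>k. 1 \<le> k \<and> k < length mu \<longrightarrow> part mu (Suc k) < part mu k"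
      show "\<forall>i. Suc i < length mu \<longrightarrow> mu ! i > mu ! Suc i"
      proof (intro allI impI)
        fix i assume "Suc i < length mu"
        then show "mu ! i > mu ! Suc i" using H[rule_format, of "Suc i"] by (auto simp: part_def)
      qed
    qed
  moreover have b: "(\<forall>i<length mu. 0 < mu ! i) \<longleftrightarrow> (\<forall>k. 1 \<le> k \<and> k \<le> length mu \<longrightarrow> 0 < part mu k)"
    proof
      assume H: "\<forall>i<length mu. 0 < mu ! i"
      show "\<forall>k. 1 \<le> k \<and> k \<le> length mu \<longrightarrow> 0 < part mu k"
        using H by (auto simp: part_def)
    next
      assume H: "\<forall>k. 1 \<le> k \<and> k \<le> length mu \<longrightarrow> 0 < part mu k"
      show "\<forall>i<length mu. 0 < mu ! i"
      proof (intro allI impI)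
        fix i assume "i < length mu"
        then show "0 < mu ! i" using H[rule_format, of "Suc i"] by (auto simp: part_def)
      qed
    qed
  ultimately show ?thesis by blast
qed

lemma sp_set2: "strict_partition mu \<Longrightarrow> set mu = {v. 0 < v \<and> (\<exists>k. part mu k = v)}"
proof -
  assume sp: "strict_partition mu"
  show ?thesis unfolding sp_set[OF sp]
  proof (rule set_eqI, rule iffI)
    fix v assume "v \<in> part mu ` {1..length mu}"
    then show "v \<in> {v. 0 < v \<and> (\<exists>k. part mu k = v)}" using sp_pos[OF sp] by auto
  next
    fix v assume "v \<in> {v. 0 < v \<and> (\<exists>k. part mu k = v)}"
    then obtain k where k: "part mu k = v" "0 < v" by auto
    then have "1 \<le> k" "k \<le> length mu" using part_gt[of mu k] by (auto intro: ccontr simp: not_less_eq_eq)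
    then show "v \<in> part mu ` {1..length mu}" using k by auto
  qed
qed

locale addbox =
  fixes lam lamp :: "nat list" and r c :: nat
  assumes sl: "strict_partition lam" and slp: "strict_partition lamp"
    and nb: "(r,c) \<notin> diagram lam" and dp: "diagram lamp = diagram lam \<union> {(r,c)}"
begin

lemma part_lamp: "part lamp k = part lam k + (if k = r then 1 else 0)"
proof -
  have "{j. (k,j) \<in> diagram lamp} = {j. (k,j) \<in> diagram lam} \<union> (if k = r then {c} else {})"
    unfolding dp by auto
  moreover have "finite {j. (k,j) \<in> diagram lam}" unfolding row_set by auto
  moreover have "k = r \<Longrightarrow> c \<notin> {j. (k,j) \<in> diagram lam}" using nb by auto
  ultimately have "card {j. (k,j) \<in> diagram lamp} = card {j. (k,j) \<in> diagram lam} + (if k = r then 1 else 0)"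
    by auto
  then show ?thesis unfolding row_card .
qed

lemma r_pos: "1 \<le> r" and c_eq: "c = r + part lam r + 1"
proof -
  have "(r,c) \<in> diagram lamp" unfolding dp by auto
  then have "1 \<le> r" "r+1 \<le> c" "c \<le> r + part lam r + 1" by (auto simp: diagram_iff part_lamp)
  moreover have "\<not> (1 \<le> r \<and> r+1 \<le> c \<and> c \<le> r + part lam r)" using nb by (simp add: diagram_iff)
  ultimately show "1 \<le> r" "c = r + part lam r + 1" by auto
qed

lemma content_eq: "content (r,c) = int (part lam r + 1)"
  unfolding content_def using c_eq by simp

lemma succ_notin: "part lam r + 1 \<notin> set lam"
proof
  assume "part lam r + 1 \<in> set lam"
  then obtain k where k: "part lam k = part lam r + 1" using sp_set2[OF sl] by auto
  then have "k \<noteq> r" by auto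
  then have "part lamp k = part lamp r" using k by (simp add: part_lamp)
  then show False using sp_inj[OF slp, of k r] \<open>k \<noteq> r\<close> by (simp add: part_lamp)
qed

lemma a_cases: "part lam r = 0 \<or> part lam r \<in> set lam"
  using sp_set2[OF sl] by auto

lemma set_lamp: "set lamp = insert (part lam r + 1) (set lam - {part lam r})"
proof (rule set_eqI)
  fix v
  show "v \<in> set lamp \<longleftrightarrow> v \<in> insert (part lam r + 1) (set lam - {part lam r})"
  proof
    assume "v \<in> set lamp"
    then obtain k where k: "part lamp k = v" "0 < v" using sp_set2[OF slp] by auto
    show "v \<in> insert (part lam r + 1) (set lam - {part lam r})"
    proof (cases "k = r")
      case True then show ?thesis using k by (simp add: part_lamp)
    next
      case False
      then have "part lam k = v" using k by (simp add: part_lamp)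
      moreover have "v \<noteq> part lam r" using sp_inj[OF sl, of k r] False k \<open>part lam k = v\<close> by auto
      ultimately show ?thesis using sp_set2[OF sl] k by auto
    qed
  next
    assume v: "v \<in> insert (part lam r + 1) (set lam - {part lam r})"
    show "v \<in> set lamp"
    proof (cases "v = part lam r + 1")
      case True then show ?thesis using sp_set2[OF slp] by (auto simp: part_lamp intro: exI[of _ r])
    next
      case False
      then obtain k where k: "part lam k = v" "0 < v" "v \<noteq> part lam r" using v sp_set2[OF sl] by auto
      then have "k \<noteq> r" by auto
      then show ?thesis using k sp_set2[OF slp] by (auto simp: part_lamp intro: exI[of _ k])
    qed
  qed
qed

end

definition Cset :: "nat list \<Rightarrow> nat set" where
  "Cset lam = {i. 1 \<le> i \<and> i \<le> length lam \<and> (i = length lam \<or> part lam (Suc i) + 1 < part lam i)}"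

lemma finite_Cset[simp]: "finite (Cset lam)"
  by (rule finite_subset[of _ "{1..length lam}"]) (auto simp: Cset_def)

lemma remove_box:
  assumes sp: "strict_partition lam" and i: "i \<in> Cset lam"
  shows "\<exists>mu. strict_partition mu \<and> (\<forall>k. part mu k = part lam k - (if k = i then 1 else 0))"
proof (cases "part lam i = 1")
  case True
  have i1: "1 \<le> i" "i \<le> length lam" using i by (auto simp: Cset_def)
  have il: "i = length lam" using i True by (auto simp: Cset_def)
  have ne: "lam \<noteq> []" using i1 by auto
  define mu where "mu = butlast lam"
  have lam_eq: "lam = mu @ [last lam]" unfolding mu_def using ne by simp
  have smu: "strict_partition mu" using strict_snoc(1)[of mu "last lam"] sp lam_eq by simp
  have lm: "length lam = Suc (length mu)" using lam_eq by (metis length_append_singleton)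
  have "part mu k = part lam k - (if k = i then 1 else 0)" for k
  proof -
    have "part lam k = (if k = Suc (length mu) then last lam else part mu k)"
      by (subst lam_eq) (rule part_snoc)
    moreover have "part mu (Suc (length mu)) = 0" by (simp add: part_gt)
    ultimately show ?thesis using True il lm by auto
  qed
  then show ?thesis using smu by blast
next
  case False
  have i1: "1 \<le> i" "i \<le> length lam" using i by (auto simp: Cset_def)
  have pi: "part lam i \<ge> 2" using False sp_pos[OF sp i1] by auto
  define mu where "mu = lam[i - 1 := part lam i - 1]"
  have lmu: "length mu = length lam" unfolding mu_def by simp
  have pm: "part mu k = part lam k - (if k = i then 1 else 0)" for k
    unfolding mu_def part_def using i1 by (auto simp: nth_list_update)
  have "strict_partition mu"
    unfolding strict_iff lmu
  proof (intro conjI allI impI)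
    fix k assume k: "1 \<le> k \<and> k \<le> length lam"
    then show "0 < part mu k" using sp_pos[OF sp, of k] pi by (auto simp: pm)
  next
    fix k assume k: "1 \<le> k \<and> k < length lam"
    have d: "part lam (Suc k) < part lam k" using sp_dec[OF sp, of k "Suc k"] k by auto
    show "part mu (Suc k) < part mu k"
    proof (cases "k = i")
      case True
      then have "part lam (Suc i) + 1 < part lam i" using i k by (auto simp: Cset_def)
      then show ?thesis using True by (simp add: pm)
    next
      case False
      then show ?thesis using d by (auto simp: pm)
    qed
  qed
  then show ?thesis using pm by blast
qed

lemma outer_corners_eq:
  assumes sp: "strict_partition lam"
  shows "outer_corners lam = (\<lambda>i. (i, i + part lam i)) ` Cset lam"
proof (rule set_eqI, rule iffI)
  fix b assume b: "b \<in> outer_corners lam"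
  obtain r c where bc: "b = (r,c)" by force
  from b obtain mu where bD: "b \<in> diagram lam" and smu: "strict_partition mu"
    and dm: "diagram mu = diagram lam - {b}" unfolding outer_corners_def by auto
  have rc: "1 \<le> r" "r + 1 \<le> c" "c \<le> r + part lam r" using bD bc by (auto simp: diagram_iff)
  have pm: "part mu k = part lam k - (if k = r then 1 else 0)" for k
  proof -
    have "{j. (k,j) \<in> diagram mu} = {j. (k,j) \<in> diagram lam} - (if k = r then {c} else {})"
      unfolding dm bc by auto
    moreover have "finite {j. (k,j) \<in> diagram lam}" unfolding row_set by auto
    moreover have "k = r \<Longrightarrow> c \<in> {j. (k,j) \<in> diagram lam}" using bD bc by auto
    ultimately have "card {j. (k,j) \<in> diagram mu} = card {j. (k,j) \<in> diagram lam} - (if k = r then 1 else 0)"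
      by auto
    then show ?thesis unfolding row_card .
  qed
  have ceq: "c = r + part lam r"
  proof (rule ccontr)
    assume "c \<noteq> r + part lam r"
    then have "(r, r + part lam r) \<in> diagram mu" unfolding dm bc using rc by (auto simp: diagram_iff)
    then show False using rc by (auto simp: diagram_iff pm)
  qed
  have rl: "r \<le> length lam" using rc part_gt[of lam r] by (cases "r \<le> length lam") auto
  have "r \<in> Cset lam"
  proof (rule ccontr)
    assume nC: "r \<notin> Cset lam"
    then have rl2: "r < length lam" and le: "part lam r \<le> part lam (Suc r) + 1"
      using rc rl by (auto simp: Cset_def)
    have "part lam (Suc r) < part lam r" using sp_dec[OF sp, of r "Suc r"] rc rl2 by auto
    then have eq: "part mu r = part mu (Suc r)" using le by (simp add: pm)
    have "part mu (Suc r) > 0" using sp_pos[OF sp, of "Suc r"] rl2 by (simp add: pm)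
    then show False using sp_inj[OF smu, of r "Suc r"] eq by simp
  qed
  then show "b \<in> (\<lambda>i. (i, i + part lam i)) ` Cset lam" using bc ceq by auto
next
  fix b assume "b \<in> (\<lambda>i. (i, i + part lam i)) ` Cset lam"
  then obtain i where i: "i \<in> Cset lam" and bi: "b = (i, i + part lam i)" by auto
  have i1: "1 \<le> i" "i \<le> length lam" using i by (auto simp: Cset_def)
  have pp: "part lam i > 0" using sp_pos[OF sp i1] .
  obtain mu where smu: "strict_partition mu" and pm: "\<forall>k. part mu k = part lam k - (if k = i then 1 else 0)"
    using remove_box[OF sp i] by blast
  have "diagram mu = diagram lam - {b}"
  proof (rule set_eqI)
    fix x :: "nat \<times> nat"
    obtain k j where x: "x = (k,j)" by force
    show "x \<in> diagram mu \<longleftrightarrow> x \<in> diagram lam - {b}"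
      unfolding x bi using pm pp by (cases "k = i") (auto simp: diagram_iff)
  qed
  moreover have "b \<in> diagram lam" unfolding bi using i1 pp by (auto simp: diagram_iff)
  ultimately show "b \<in> outer_corners lam" unfolding outer_corners_def using smu by blast
qed



lemma strict_sorted_nth_less_iff:
  assumes "sorted_wrt (<) (ys::nat list)" "a < length ys" "b < length ys"
  shows "ys ! a < ys ! b \<longleftrightarrow> a < (b::nat)"
proof
  assume h: "ys ! a < ys ! b"
  show "a < b"
  proof (rule ccontr)
    assume "\<not> a < b"
    show False
    proof (cases "b = a")
      case True then show False using h by simp
    next
      case False
      then have "b < a" using \<open>\<not> a < b\<close> by auto
      then show False using h sorted_wrt_nth_less[OF assms(1) \<open>b < a\<close>] assms(2) by simp
    qed
  qed
next
  assume "a < b" then show "ys ! a < ys ! b" using sorted_wrt_nth_less[OF assms(1)] assms by auto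
qed

context
  fixes lam assumes sp: "strict_partition lam"
begin

definition "xsl = sorted_list_of_set (Cset lam)"
definition "zsl = 0 # xsl"
definition "mm = length xsl"

lemma set_xsl: "set xsl = Cset lam" unfolding xsl_def by simp
lemma distinct_xsl: "distinct xsl" unfolding xsl_def by simp
lemma sorted_xsl: "sorted_wrt (<) xsl" unfolding xsl_def by (simp add: sorted_list_of_set.strict_sorted_key_list_of_set)
lemma Cset_pos: "x \<in> Cset lam \<Longrightarrow> 1 \<le> x \<and> x \<le> length lam" by (auto simp: Cset_def)
lemma sorted_zsl: "sorted_wrt (<) zsl"
  unfolding zsl_def using sorted_xsl set_xsl Cset_pos by fastforce
lemma set_zsl: "set zsl = insert 0 (Cset lam)" using set_xsl by (simp add: zsl_def)
lemma length_zsl: "length zsl = Suc mm" unfolding zsl_def mm_def by simp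
lemma distinct_zsl: "distinct zsl" using sorted_zsl by (simp add: strict_sorted_iff)

lemma fst_oc: "fst ` outer_corners lam = Cset lam"
  unfolding outer_corners_eq[OF sp] by (auto simp: image_image)

lemma the_oc: "r \<in> Cset lam \<Longrightarrow> (THE c. (r, c) \<in> outer_corners lam) = r + part lam r"
  unfolding outer_corners_eq[OF sp] by (rule the_equality) auto

lemma corner_list_eq: "corner_list lam = map (\<lambda>r. (r, r + part lam r)) (rev xsl)"
  unfolding corner_list_def fst_oc xsl_def[symmetric]
  by (rule map_cong[OF refl]) (simp add: the_oc set_xsl)

lemma ncorners_eq: "ncorners lam = mm"
  unfolding ncorners_def corner_list_eq mm_def by simp

lemma len_in_C: "1 \<le> length lam \<Longrightarrow> length lam \<in> Cset lam"
  unfolding Cset_def by auto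

lemma alpha_eq: "alpha lam j = (if 1 \<le> j \<and> j \<le> mm then int (xsl ! (mm - j)) else 0)"
  unfolding alpha_def ncorners_eq corner_list_eq using rev_nth[of "j - 1" xsl]
  by (auto simp: mm_def Suc_diff_Suc)

lemma beta_eq: "1 \<le> j \<Longrightarrow> j \<le> mm \<Longrightarrow> beta lam j = int (xsl ! (mm - j) + part lam (xsl ! (mm - j)))"
  unfolding beta_def corner_list_eq using rev_nth[of "j - 1" xsl]
  by (auto simp: mm_def Suc_diff_Suc)

lemma ycont_eq: "1 \<le> j \<Longrightarrow> j \<le> mm \<Longrightarrow> ycont lam j = int (part lam (xsl ! (mm - j)))"
  unfolding ycont_def by (simp add: beta_eq alpha_eq)

lemma zsl_Suc: "zsl ! Suc k = xsl ! k" unfolding zsl_def by simp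

lemma alpha_Suc: "j \<le> mm \<Longrightarrow> alpha lam (j + 1) = int (zsl ! (mm - j))"
proof (cases "j + 1 \<le> mm")
  case True
  then have "mm - j = Suc (mm - (j+1))" by auto
  then show ?thesis using True by (simp add: alpha_eq zsl_Suc)
next
  case False
  assume "j \<le> mm"
  then have "j = mm" using False by auto
  then show ?thesis by (simp add: alpha_eq zsl_def)
qed

lemma zsl_last: "zsl ! mm = length lam"
proof (cases "mm = 0")
  case True
  then have "Cset lam = {}" using set_xsl by (simp add: mm_def)
  then have "length lam = 0" using len_in_C by (cases "length lam") auto
  moreover have "zsl ! mm = 0" using True by (simp add: zsl_def)
  ultimately show ?thesis by linarith
next
  case False
  then obtain k where k: "mm = Suc k" by (cases mm) auto
  have "xsl ! k \<in> Cset lam" using k set_xsl by (metis lessI mm_def nth_mem)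
  then have le: "xsl ! k \<le> length lam" using Cset_pos by auto
  have "Cset lam \<noteq> {}" using False set_xsl by (auto simp: mm_def)
  then have "1 \<le> length lam" using Cset_pos by fastforce
  then have "length lam \<in> set xsl" using len_in_C set_xsl by simp
  then obtain s where s: "s < mm" "xsl ! s = length lam" by (auto simp: in_set_conv_nth mm_def)
  have "s \<le> k" using s k by auto
  then have "xsl ! s \<le> xsl ! k" using sorted_wrt_nth_less[OF sorted_xsl, of s k] k
    by (cases "s = k") (auto simp: mm_def)
  then show ?thesis using s le k zsl_Suc by auto
qed

lemma between:
  assumes uv: "u < v" and vC: "v \<in> Cset lam" and no: "\<forall>w. u < w \<and> w < v \<longrightarrow> w \<notin> Cset lam"
  shows "v + part lam v = (u + 1) + part lam (u + 1)"
proof -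
  have vl: "v \<le> length lam" using vC Cset_pos by auto
  have step: "k + part lam k = Suc k + part lam (Suc k)" if k: "u < k" "k < v" for k
  proof -
    have nC: "k \<notin> Cset lam" using no k by blast
    have kl: "1 \<le> k" "k < length lam" using k vl by linarith+
    then have "\<not> part lam (Suc k) + 1 < part lam k" using nC unfolding Cset_def by auto
    moreover have "part lam (Suc k) < part lam k" using sp_dec[OF sp, of k "Suc k"] kl by simp
    ultimately show ?thesis by linarith
  qed
  have main: "d \<le> v - (u+1) \<Longrightarrow> (v - d) + part lam (v - d) = v + part lam v" for d
  proof (induction d)
    case 0 then show ?case by simp
  next
    case (Suc d)
    have a: "u < v - Suc d" "v - Suc d < v" using Suc.prems uv by linarith+
    have b: "Suc (v - Suc d) = v - d" using Suc.prems uv by linarith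
    show ?case using step[OF a] Suc.IH Suc.prems b by simp
  qed
  show ?thesis using main[of "v - (u+1)"] uv by (simp add: Suc_diff_Suc)
qed

lemma consec:
  assumes t: "t < mm" and w: "zsl ! t < w" "w < zsl ! Suc t"
  shows "w \<notin> Cset lam"
proof
  assume "w \<in> Cset lam"
  then have "w \<in> set zsl" using set_zsl by auto
  then obtain s where s: "s < length zsl" "zsl ! s = w" by (auto simp: in_set_conv_nth)
  have l: "t < length zsl" "Suc t < length zsl" using t length_zsl by auto
  have "t < s" using strict_sorted_nth_less_iff[OF sorted_zsl l(1) s(1)] w s by auto
  moreover have "s < Suc t" using strict_sorted_nth_less_iff[OF sorted_zsl s(1) l(2)] w s by auto
  ultimately show False by auto
qed

lemma xcont_eq: "j \<le> mm \<Longrightarrow> xcont lam j = int (part lam (zsl ! (mm - j) + 1) + 1)"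
proof (cases "j = 0")
  case True
  then show ?thesis unfolding xcont_def using alpha_Suc[of 0] zsl_last
    by (simp add: beta_def part_gt)
next
  case False
  assume jm: "j \<le> mm"
  define t where "t = mm - j"
  have t: "t < mm" "mm - j = t" using False jm by (auto simp: t_def)
  have xsl_t: "xsl ! t = zsl ! Suc t" by (simp add: zsl_Suc)
  have "xsl ! t \<in> set xsl" using t(1) unfolding mm_def by (rule nth_mem)
  then have vC: "zsl ! Suc t \<in> Cset lam" using set_xsl xsl_t by simp
  have uv: "zsl ! t < zsl ! Suc t"
    using sorted_wrt_nth_less[OF sorted_zsl, of t "Suc t"] t length_zsl by auto
  have "zsl ! Suc t + part lam (zsl ! Suc t) = (zsl ! t + 1) + part lam (zsl ! t + 1)"
    using between[OF uv vC] consec[OF t(1)] by blast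
  moreover have "beta lam j = int (zsl ! Suc t + part lam (zsl ! Suc t))"
    using beta_eq[of j] False jm t(2) xsl_t by simp
  moreover have "alpha lam (j + 1) = int (zsl ! t)" using alpha_Suc[OF jm] t(2) by simp
  ultimately show ?thesis unfolding xcont_def t(2) by simp
qed

definition "gx z = part lam (z + 1) + 1"

lemma gx_inj: "inj_on gx (insert 0 (Cset lam))"
proof (rule inj_onI)
  fix z z' assume z: "z \<in> insert 0 (Cset lam)" "z' \<in> insert 0 (Cset lam)" and e: "gx z = gx z'"
  have zl: "z \<le> length lam" "z' \<le> length lam" using z Cset_pos by auto
  have e2: "part lam (z+1) = part lam (z'+1)" using e by (simp add: gx_def)
  show "z = z'"
  proof (cases "part lam (z+1) > 0")
    case True then show ?thesis using sp_inj[OF sp e2] by simp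
  next
    case False
    then have "\<not> z + 1 \<le> length lam" "\<not> z' + 1 \<le> length lam" using sp_pos[OF sp, of "z+1"] sp_pos[OF sp, of "z'+1"] e2 by auto
    then show ?thesis using zl by auto
  qed
qed

definition "xn j = gx (zsl ! (mm - j))"

lemma xcont_xn: "j \<le> mm \<Longrightarrow> xcont lam j = int (xn j)"
  using xcont_eq by (simp add: xn_def gx_def)

lemma zsl_img: "(\<lambda>j. zsl ! (mm - j)) ` {0..mm} = insert 0 (Cset lam)"
proof -
  have "(\<lambda>j. zsl ! (mm - j)) ` {0..mm} = set zsl"
  proof (rule set_eqI, rule iffI)
    fix x assume "x \<in> (\<lambda>j. zsl ! (mm - j)) ` {0..mm}"
    then show "x \<in> set zsl" using length_zsl by auto
  next
    fix x assume "x \<in> set zsl"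
    then obtain k where k: "k < Suc mm" "x = zsl ! k" using length_zsl by (auto simp: in_set_conv_nth)
    then show "x \<in> (\<lambda>j. zsl ! (mm - j)) ` {0..mm}" by (intro image_eqI[of _ _ "mm - k"]) auto
  qed
  then show ?thesis using set_zsl by simp
qed

lemma xn_inj: "inj_on xn {0..mm}"
proof (rule inj_onI)
  fix j j' assume j: "j \<in> {0..mm}" "j' \<in> {0..mm}" and e: "xn j = xn j'"
  have "zsl ! (mm - j) \<in> insert 0 (Cset lam)" "zsl ! (mm - j') \<in> insert 0 (Cset lam)"
    using zsl_img j by auto
  then have "zsl ! (mm - j) = zsl ! (mm - j')" using gx_inj e unfolding xn_def inj_on_def by blast
  then have "mm - j = mm - j'" using nth_eq_iff_index_eq[OF distinct_zsl] length_zsl j by auto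
  then show "j = j'" using j by auto
qed

lemma xn_img: "xn ` {0..mm} = gx ` insert 0 (Cset lam)"
  unfolding xn_def zsl_img[symmetric] by (simp add: image_image)

lemma prod_x:
  assumes "i \<le> mm"
  shows "(\<Prod>j\<in>{0..mm} - {i}. f (xcont lam j)) = (\<Prod>v\<in>gx ` insert 0 (Cset lam) - {xn i}. f (int v))"
proof -
  have "(\<Prod>j\<in>{0..mm} - {i}. f (xcont lam j)) = (\<Prod>j\<in>{0..mm} - {i}. f (int (xn j)))"
    by (rule prod.cong[OF refl]) (simp add: xcont_xn)
  also have "\<dots> = (\<Prod>v\<in>xn ` ({0..mm} - {i}). f (int v))"
    using xn_inj by (subst prod.reindex) (auto intro: inj_on_subset)
  also have "xn ` ({0..mm} - {i}) = gx ` insert 0 (Cset lam) - {xn i}"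
    using inj_on_image_set_diff[OF xn_inj, of "{0..mm}" "{i}"] assms xn_img by auto
  finally show ?thesis .
qed

lemma prod_y:
  "(\<Prod>j\<in>{1..mm}. f (ycont lam j)) = (\<Prod>v\<in>part lam ` Cset lam. f (int v))"
proof -
  have "(\<Prod>j\<in>{1..mm}. f (ycont lam j)) = (\<Prod>j\<in>{1..mm}. f (int (part lam (xsl ! (mm - j)))))"
    by (rule prod.cong[OF refl]) (simp add: ycont_eq)
  also have "\<dots> = (\<Prod>k\<in>{0..<mm}. f (int (part lam (xsl ! k))))"
    by (rule prod.reindex_bij_witness[where i="\<lambda>k. mm - k" and j="\<lambda>j. mm - j"]) auto
  also have "\<dots> = (\<Prod>c\<in>Cset lam. f (int (part lam c)))"
  proof -
    have inj: "inj_on ((!) xsl) {0..<mm}" using distinct_xsl by (simp add: inj_on_nth mm_def)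
    have "(!) xsl ` {0..<mm} = set xsl" by (auto simp: in_set_conv_nth mm_def)
    then have img: "(!) xsl ` {0..<mm} = Cset lam" using set_xsl by simp
    show ?thesis using prod.reindex[OF inj, of "\<lambda>c. f (int (part lam c))"] img by simp
  qed
  also have "\<dots> = (\<Prod>v\<in>part lam ` Cset lam. f (int v))"
  proof -
    have "inj_on (part lam) (Cset lam)"
    proof (rule inj_onI)
      fix c c' assume c: "c \<in> Cset lam" "c' \<in> Cset lam" and e: "part lam c = part lam c'"
      have "part lam c > 0" using sp_pos[OF sp] Cset_pos[OF c(1)] by auto
      then show "c = c'" using sp_inj[OF sp e] by simp
    qed
    then show ?thesis by (simp add: prod.reindex)
  qed
  finally show ?thesis .
qed

lemma xcont0: "xcont lam 0 = 1"
  using xcont_eq[of 0] zsl_last by (simp add: part_gt)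

lemma xn0: "xn 0 = 1"
  using xcont_xn[of 0] xcont0 by simp

end


lemma gchoose2: "(y::real) gchoose 2 = y * (y - 1) / 2"
  by (simp add: gbinomial_prod_rev numeral_2_eq_2)

definition ff :: "nat \<Rightarrow> nat \<Rightarrow> real" where
  "ff x v = (real x gchoose 2) - (real v gchoose 2)"

lemma ff_eq: "ff x v = (real x - real v) * (real x + real v - 1) / 2"
  unfolding ff_def gchoose2 by (simp add: field_simps)

lemma ff_nz: "1 \<le> v \<Longrightarrow> 1 \<le> x \<Longrightarrow> v \<noteq> x \<Longrightarrow> ff x v \<noteq> 0"
  unfolding ff_eq by auto

lemma telescope:
  assumes fin: "finite A" and nz: "\<forall>q\<in>A \<union> Suc ` A. g q \<noteq> (0::real)"
  shows "(\<Prod>q\<in>A. g q / g (Suc q)) = (\<Prod>q\<in>A - Suc ` A. g q) / (\<Prod>q\<in>Suc ` A - A. g q)"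
proof -
  define B where "B = Suc ` A"
  have finB: "finite B" using fin by (simp add: B_def)
  have "(\<Prod>q\<in>A. g (Suc q)) = (\<Prod>q\<in>B. g q)"
    unfolding B_def by (subst prod.reindex) auto
  moreover have "(\<Prod>q\<in>A. g q) = (\<Prod>q\<in>A - B. g q) * (\<Prod>q\<in>A \<inter> B. g q)"
    using prod.subset_diff[of "A \<inter> B" A g] fin by (simp add: Diff_Int)
  moreover have "(\<Prod>q\<in>B. g q) = (\<Prod>q\<in>B - A. g q) * (\<Prod>q\<in>A \<inter> B. g q)"
    using prod.subset_diff[of "A \<inter> B" B g] finB by (simp add: Diff_Int Int_commute)
  moreover have "(\<Prod>q\<in>A \<inter> B. g q) \<noteq> 0" using nz fin by (auto simp: prod_zero_iff)
  ultimately show ?thesis unfolding prod_dividef B_def[symmetric] by simp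
qed

context
  fixes lam assumes sp: "strict_partition lam"
begin

lemma mono_p: "1 \<le> i \<Longrightarrow> i \<le> j \<Longrightarrow> j \<le> length lam + 1 \<Longrightarrow> part lam j \<le> part lam i"
  using sp_gap[OF sp, of i j] by simp

lemma smono_p: "1 \<le> i \<Longrightarrow> i < j \<Longrightarrow> j \<le> length lam + 1 \<Longrightarrow> part lam j < part lam i"
  using sp_gap[OF sp, of i j] by simp

lemma Y_char: "part lam ` Cset lam = {q \<in> set lam. q - 1 \<notin> set lam}"
proof (rule set_eqI, rule iffI)
  fix v assume "v \<in> part lam ` Cset lam"
  then obtain c where c: "c \<in> Cset lam" "v = part lam c" by auto
  have c1: "1 \<le> c" "c \<le> length lam" using c Cset_pos[OF sp] by auto
  have vP: "v \<in> set lam" using c c1 sp_set[OF sp] by auto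
  have "v - 1 \<notin> set lam"
  proof
    assume "v - 1 \<in> set lam"
    then obtain k where k: "k \<in> {1..length lam}" "part lam k = v - 1" using sp_set[OF sp] by auto
    have pc: "part lam c > 0" using sp_pos[OF sp c1] .
    have "c < k"
    proof (rule ccontr)
      assume "\<not> c < k" then have "part lam c \<le> part lam k" using mono_p[of k c] k c1 by auto
      then show False using k pc c by auto
    qed
    then have "c \<noteq> length lam" using k by auto
    then have "part lam (Suc c) + 1 < part lam c" using c by (auto simp: Cset_def)
    moreover have "part lam k \<le> part lam (Suc c)" using mono_p[of "Suc c" k] \<open>c < k\<close> k by auto
    ultimately show False using k c by auto
  qed
  then show "v \<in> {q \<in> set lam. q - 1 \<notin> set lam}" using vP by auto
next
  fix v assume v: "v \<in> {q \<in> set lam. q - 1 \<notin> set lam}"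
  then obtain k where k: "k \<in> {1..length lam}" "part lam k = v" using sp_set[OF sp] by auto
  have "k \<in> Cset lam"
  proof (cases "k = length lam")
    case True then show ?thesis using k by (auto simp: Cset_def)
  next
    case False
    then have kl: "Suc k \<le> length lam" using k by auto
    have lt: "part lam (Suc k) < part lam k" using smono_p[of k "Suc k"] k kl by auto
    have inS: "part lam (Suc k) \<in> set lam" using sp_set[OF sp] kl by auto
    have "part lam (Suc k) + 1 < part lam k"
    proof (rule ccontr)
      assume "\<not> part lam (Suc k) + 1 < part lam k"
      then have "part lam k - 1 = part lam (Suc k)" using lt by linarith
      then show False using inS v k by auto
    qed
    then show ?thesis using k by (auto simp: Cset_def)
  qed
  then show "v \<in> part lam ` Cset lam" using k by auto
qed

lemma X_char: "gx lam ` insert 0 (Cset lam) = Suc ` {q. q = 0 \<or> (q \<in> set lam \<and> Suc q \<notin> set lam)}"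
proof (rule set_eqI, rule iffI)
  fix v assume "v \<in> gx lam ` insert 0 (Cset lam)"
  then obtain z where z: "z \<in> insert 0 (Cset lam)" "v = Suc (part lam (z + 1))"
    by (auto simp: gx_def[OF sp])
  have zl: "z \<le> length lam" using z Cset_pos[OF sp] by auto
  have "part lam (z+1) = 0 \<or> (part lam (z+1) \<in> set lam \<and> Suc (part lam (z+1)) \<notin> set lam)"
  proof (cases "part lam (z+1) = 0")
    case False
    then have z1: "z + 1 \<le> length lam" using part_gt[of lam "z+1"] by (cases "z + 1 \<le> length lam") auto
    then have inP: "part lam (z+1) \<in> set lam" using sp_set[OF sp] by auto
    have "Suc (part lam (z+1)) \<notin> set lam"
    proof
      assume "Suc (part lam (z+1)) \<in> set lam"
      then obtain k where k: "k \<in> {1..length lam}" "part lam k = Suc (part lam (z+1))" using sp_set[OF sp] by auto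
      have "k \<le> z"
      proof (rule ccontr)
        assume "\<not> k \<le> z" then have "part lam k \<le> part lam (z+1)" using mono_p[of "z+1" k] k by auto
        then show False using k by auto
      qed
      then have "z \<noteq> 0" using k by auto
      then have zC: "z \<in> Cset lam" using z by auto
      then have "part lam (Suc z) + 1 < part lam z" using z1 by (auto simp: Cset_def)
      moreover have "part lam z \<le> part lam k" using mono_p[of k z] k \<open>k \<le> z\<close> zl by auto
      ultimately show False using k by auto
    qed
    then show ?thesis using inP by auto
  qed auto
  then show "v \<in> Suc ` {q. q = 0 \<or> (q \<in> set lam \<and> Suc q \<notin> set lam)}" using z by auto
next
  fix v assume "v \<in> Suc ` {q. q = 0 \<or> (q \<in> set lam \<and> Suc q \<notin> set lam)}"
  then obtain q where v: "v = Suc q" and q: "q = 0 \<or> (q \<in> set lam \<and> Suc q \<notin> set lam)" by auto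
  show "v \<in> gx lam ` insert 0 (Cset lam)"
  proof (cases "q = 0")
    case True
    have "length lam \<in> insert 0 (Cset lam)" using len_in_C[OF sp] by (cases "length lam") auto
    moreover have "gx lam (length lam) = v" using True v by (simp add: gx_def[OF sp] part_gt)
    ultimately show ?thesis by (metis image_eqI)
  next
    case False
    then have qP: "q \<in> set lam" "Suc q \<notin> set lam" using q by auto
    then obtain t where t: "t \<in> {1..length lam}" "part lam t = q" using sp_set[OF sp] by auto
    have "t - 1 \<in> insert 0 (Cset lam)"
    proof (cases "t = 1")
      case False
      define z where "z = t - 1"
      have z: "1 \<le> z" "z < length lam" "Suc z = t" using t False by (auto simp: z_def)
      have "part lam t < part lam z" using smono_p[of z t] z t by auto
      moreover have "part lam z \<in> set lam" using sp_set[OF sp] z by auto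
      ultimately have "part lam (Suc z) + 1 < part lam z" using qP t z
        by (cases "part lam z = Suc q") auto
      then show ?thesis using z by (auto simp: Cset_def z_def)
    qed simp
    moreover have "gx lam (t - 1) = v" using t v by (simp add: gx_def[OF sp])
    ultimately show ?thesis by (metis image_eqI)
  qed
qed

lemma FF_pos: "finite S \<Longrightarrow> FF S > 0"
  unfolding FF_def hh_def by (intro prod_pos mult_pos_pos divide_pos_pos) auto

end


lemma rp: fixes u w :: real
  assumes "w < u \<or> u + 1 < w" "0 \<le> u" "0 \<le> w"
  shows "((u + w) / \<bar>u - w\<bar>) / ((u + 1 + w) / \<bar>u + 1 - w\<bar>) = ((u + 1 - w) * (u + w)) / ((u - w) * (u + w + 1))"
proof (cases "w < u")
  case True
  then have "\<bar>u - w\<bar> = u - w" "\<bar>u + 1 - w\<bar> = u + 1 - w" by auto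
  moreover have "u - w > 0" "u + 1 - w > 0" "u + w + 1 > 0" using True assms by auto
  ultimately show ?thesis by (simp add: field_simps)
next
  case False
  then have w: "u + 1 < w" using assms by auto
  then have "\<bar>u - w\<bar> = w - u" "\<bar>u + 1 - w\<bar> = w - u - 1" by auto
  moreover have "w - u > 0" "w - u - 1 > 0" "u + w + 1 > 0" using w assms by auto
  ultimately have l: "((u + w) / \<bar>u - w\<bar>) / ((u + 1 + w) / \<bar>u + 1 - w\<bar>) = ((w - u - 1) * (u + w)) / ((w - u) * (u + w + 1))"
    by (simp add: field_simps)
  have e: "u + 1 - w = -(w - u - 1)" "u - w = -(w - u)" by auto
  have "((u + 1 - w) * (u + w)) / ((u - w) * (u + w + 1)) = (-(w - u - 1) * (u + w)) / (-(w - u) * (u + w + 1))"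
    by (simp only: e)
  also have "\<dots> = ((w - u - 1) * (u + w)) / ((w - u) * (u + w + 1))" by (simp only: mult_minus_left minus_divide_divide)
  finally show ?thesis using l by simp
qed

lemma ratio_pt:
  assumes "q \<noteq> a" "q \<noteq> a + 1"
  shows "((real a + real q) / \<bar>real a - real q\<bar>) / ((real (a+1) + real q) / \<bar>real (a+1) - real q\<bar>)
       = ff (a+1) q / ff (a+1) (Suc q)"
proof -
  have c: "real q < real a \<or> real a + 1 < real q" using assms by auto
  have e1: "ff (a+1) q = (real a + 1 - real q) * (real a + real q) / 2" by (simp add: ff_eq algebra_simps)
  have e2: "ff (a+1) (Suc q) = (real a - real q) * (real a + real q + 1) / 2" by (simp add: ff_eq algebra_simps)
  show ?thesis using rp[OF c] unfolding e1 e2 by (simp add: add_ac)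
qed

lemma mem_Suc_image: "q \<in> Suc ` S \<longleftrightarrow> (0 < q \<and> q - 1 \<in> S)"
  by (cases q) auto

context fixes P :: "nat set" and a :: nat
  assumes P0: "0 \<notin> P"
begin
lemma setA: "P - Suc ` P = {q\<in>P. q - 1 \<notin> P}"
  using P0 by (auto simp: mem_Suc_image)
lemma setB: "1 \<notin> P \<Longrightarrow> Suc ` P - P = Suc ` {q. q = 0 \<or> (q \<in> P \<and> Suc q \<notin> P)} - {1}"
  using P0 by (auto simp: mem_Suc_image)
lemma setC: "a \<in> P \<Longrightarrow> Suc a \<notin> P \<Longrightarrow> a - 1 \<in> P \<Longrightarrow> (P - {a}) - Suc ` (P - {a}) = {q\<in>P. q - 1 \<notin> P}"
  using P0 by (auto simp: mem_Suc_image)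
lemma setD: assumes "a \<in> P" "Suc a \<notin> P" "a - 1 \<in> P"
  shows "Suc ` (P - {a}) - (P - {a}) = insert a (Suc ` {q. q = 0 \<or> (q \<in> P \<and> Suc q \<notin> P)} - {1, Suc a})"
proof -
  have "0 < a" using P0 assms(1) by (cases a) auto
  then show ?thesis using P0 assms by (auto simp: mem_Suc_image)
qed
lemma setE: "a \<in> P \<Longrightarrow> Suc a \<notin> P \<Longrightarrow> a - 1 \<notin> P \<Longrightarrow> (P - {a}) - Suc ` (P - {a}) = {q\<in>P. q - 1 \<notin> P} - {a}"
  using P0 by (auto simp: mem_Suc_image)
lemma setF: "a \<in> P \<Longrightarrow> Suc a \<notin> P \<Longrightarrow> a - 1 \<notin> P \<Longrightarrow> Suc ` (P - {a}) - (P - {a}) = Suc ` {q. q = 0 \<or> (q \<in> P \<and> Suc q \<notin> P)} - {1, Suc a}"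
  using P0 by (auto simp: mem_Suc_image)
end

theorem theorem3p1:
  fixes lam lamp :: "nat list" and i :: nat and b :: "nat \<times> nat"
  assumes "strict_partition lam"
    and "i \<le> ncorners lam"
    and "strict_partition lamp"
    and "b \<notin> diagram lam"
    and "diagram lamp = diagram lam \<union> {b}"
    and "content b = xcont lam i"
  shows "(i = 0 \<longrightarrow>
           real (hook_product lam) / real (hook_product lamp) =
             (\<Prod>j\<in>{1..ncorners lam}.
                 (of_int (xcont lam 0) gchoose 2) - (of_int (ycont lam j) gchoose 2))
           / (\<Prod>j\<in>{1..ncorners lam}.
                 (of_int (xcont lam 0) gchoose 2) - (of_int (xcont lam j) gchoose 2)))
       \<and> (1 \<le> i \<longrightarrow>
           real (hook_product lam) / real (hook_product lamp) =
             1 / 2 * ((\<Prod>j\<in>{1..ncorners lam}.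
                 (of_int (xcont lam i) gchoose 2) - (of_int (ycont lam j) gchoose 2))
           / (\<Prod>j\<in>{0..ncorners lam} - {i}.
                 (of_int (xcont lam i) gchoose 2) - (of_int (xcont lam j) gchoose 2))))"
proof -
  note sp = assms(1)
  obtain r c where b: "b = (r,c)" by force
  interpret ab: addbox lam lamp r c using assms b by unfold_locales auto
  define a where "a = part lam r"
  define x where "x = a + 1"
  define P where "P = set lam"
  define Q where "Q = P - {a}"
  define X where "X = gx lam ` insert 0 (Cset lam)"
  define Y where "Y = part lam ` Cset lam"
  have im: "i \<le> mm lam" using assms(2) ncorners_eq[OF sp] by simp
  have xi: "x = xn lam i"
    using assms(6) ab.content_eq xcont_xn[OF sp im] b by (simp add: x_def a_def)
  have xcx: "xcont lam i = int x" using xcont_xn[OF sp im] xi by simp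
  have xP: "x \<notin> P" using ab.succ_notin by (simp add: x_def a_def P_def)
  have aP: "a = 0 \<or> a \<in> P" using ab.a_cases by (simp add: a_def P_def)
  have P0: "0 \<notin> P" using sp unfolding P_def strict_partition_def by auto
  have finP: "finite P" unfolding P_def by simp
  have xX: "x \<in> X" unfolding X_def xi using xn_img[OF sp] im by (metis atLeastAtMost_iff image_eqI le0)
  have one_X: "1 \<in> X" unfolding X_def using xn_img[OF sp] xn0[OF sp] by (metis atLeastAtMost_iff image_eqI le0)
  have i0: "i = 0 \<longleftrightarrow> x = 1"
    using xn_inj[OF sp] xn0[OF sp] im xi unfolding inj_on_def by (metis atLeastAtMost_iff le0)
  have Xc: "X = Suc ` {q. q = 0 \<or> (q \<in> P \<and> Suc q \<notin> P)}" unfolding X_def P_def by (rule X_char[OF sp])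
  have Yc: "Y = {q \<in> P. q - 1 \<notin> P}" unfolding Y_def P_def by (rule Y_char[OF sp])
  have Xge: "v \<in> X \<Longrightarrow> 1 \<le> v" for v unfolding Xc by auto
  have Pge: "v \<in> P \<Longrightarrow> 1 \<le> v" for v using P0 by (cases v) auto
  have Ysub: "Y \<subseteq> P" unfolding Yc by auto
  have HH: "real (hook_product lam) / real (hook_product lamp) = FF P / FF (insert x Q)"
    using hook_closed[OF sp] hook_closed[OF assms(3)] ab.set_lamp
    by (simp add: P_def Q_def x_def a_def)
  have finQ: "finite Q" unfolding Q_def using finP by simp
  have xQ: "x \<notin> Q" using xP unfolding Q_def by simp
  have FP: "FF P = fact a * (\<Prod>q\<in>Q. (real a + real q) / \<bar>real a - real q\<bar>) * FF Q"
  proof (cases "a = 0")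
    case True
    then have "P = Q" using P0 unfolding Q_def by auto
    moreover have "(\<Prod>q\<in>Q. (real a + real q) / \<bar>real a - real q\<bar>) = 1"
      using True Pge unfolding Q_def by (intro prod.neutral) auto
    ultimately show ?thesis using True by simp
  next
    case False
    then have "P = insert a Q" using aP unfolding Q_def by auto
    then show ?thesis using FF_insert[OF finQ, of a] by (simp add: Q_def)
  qed
  have FP': "FF (insert x Q) = fact x * (\<Prod>q\<in>Q. (real x + real q) / \<bar>real x - real q\<bar>) * FF Q"
    using FF_insert[OF finQ xQ] .
  have FQ: "FF Q > 0" using FF_pos[OF sp finQ] .
  have Bnz: "(\<Prod>q\<in>Q. (real x + real q) / \<bar>real x - real q\<bar>) \<noteq> 0"
  proof -
    have "\<forall>q\<in>Q. real x - real q \<noteq> 0" using xQ by auto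
    moreover have "x > 0" unfolding x_def by simp
    ultimately show ?thesis using finQ by (auto simp: prod_zero_iff)
  qed
  have R1: "FF P / FF (insert x Q) = (1 / real x) * (\<Prod>q\<in>Q. ff x q / ff x (Suc q))"
  proof -
    have "FF P / FF (insert x Q) = (fact a / fact x) * ((\<Prod>q\<in>Q. (real a + real q) / \<bar>real a - real q\<bar>) / (\<Prod>q\<in>Q. (real x + real q) / \<bar>real x - real q\<bar>))"
      unfolding FP FP' using FQ Bnz by (simp add: field_simps)
    also have "fact a / fact x = (1 / real x :: real)"
    proof -
      have "(fact x :: real) = real x * fact a" unfolding x_def by simp
      moreover have "(fact a :: real) > 0" by simp
      ultimately show ?thesis unfolding x_def by simp
    qed
    also have "(\<Prod>q\<in>Q. (real a + real q) / \<bar>real a - real q\<bar>) / (\<Prod>q\<in>Q. (real x + real q) / \<bar>real x - real q\<bar>)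
       = (\<Prod>q\<in>Q. ((real a + real q) / \<bar>real a - real q\<bar>) / ((real x + real q) / \<bar>real x - real q\<bar>))"
      by (rule prod_dividef[symmetric])
    also have "\<dots> = (\<Prod>q\<in>Q. ff x q / ff x (Suc q))"
    proof (rule prod.cong[OF refl])
      fix q assume q: "q \<in> Q"
      then have "q \<noteq> a" "q \<noteq> a + 1" using xQ unfolding Q_def x_def by auto
      then show "((real a + real q) / \<bar>real a - real q\<bar>) / ((real x + real q) / \<bar>real x - real q\<bar>) = ff x q / ff x (Suc q)"
        using ratio_pt[of q a] unfolding x_def by simp
    qed
    finally show ?thesis .
  qed
  have R2: "(\<Prod>q\<in>Q. ff x q / ff x (Suc q)) = (\<Prod>q\<in>Q - Suc ` Q. ff x q) / (\<Prod>q\<in>Suc ` Q - Q. ff x q)"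
  proof (rule telescope[OF finQ])
    show "\<forall>q\<in>Q \<union> Suc ` Q. ff x q \<noteq> 0"
    proof
      fix q assume q: "q \<in> Q \<union> Suc ` Q"
      have "1 \<le> q" using q Pge unfolding Q_def by auto
      moreover have "q \<noteq> x" using q xQ unfolding Q_def x_def by auto
      ultimately show "ff x q \<noteq> 0" using ff_nz unfolding x_def by auto
    qed
  qed
  have Xnz: "(\<Prod>v\<in>S. ff x v) \<noteq> 0" if "S \<subseteq> X - {x}" for S
  proof -
    have "finite X" unfolding X_def by simp
    then have "finite S" using that by (meson finite_Diff finite_subset)
    moreover have "\<forall>v\<in>S. ff x v \<noteq> 0" using that Xge ff_nz[of _ x] unfolding x_def by auto
    ultimately show ?thesis by (simp add: prod_zero_iff)
  qed
  define phi where "phi z = (of_int (xcont lam i) gchoose 2) - (of_int z gchoose 2 :: real)" for z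
  have phi: "phi (int v) = ff x v" for v unfolding phi_def ff_def xcx by simp
  have PY: "(\<Prod>j\<in>{1..ncorners lam}. phi (ycont lam j)) = (\<Prod>v\<in>Y. ff x v)"
    unfolding ncorners_eq[OF sp] Y_def prod_y[OF sp, of phi] phi ..
  have PX: "(\<Prod>j\<in>{0..ncorners lam} - {i}. phi (xcont lam j)) = (\<Prod>v\<in>X - {x}. ff x v)"
    unfolding ncorners_eq[OF sp] X_def prod_x[OF sp im, of phi] phi xi ..
  show ?thesis
  proof (intro conjI impI)
    assume i: "i = 0"
    then have x1: "x = 1" and a0: "a = 0" using i0 unfolding x_def by auto
    have QP: "Q = P" using a0 P0 unfolding Q_def by auto
    have one_P: "1 \<notin> P" using xP x1 by simp
    have s1: "Q - Suc ` Q = Y" unfolding QP Yc by (rule setA[OF P0])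
    have s2: "Suc ` Q - Q = X - {x}" unfolding QP Xc x1 by (rule setB[OF P0 one_P])
    have main: "real (hook_product lam) / real (hook_product lamp) = (\<Prod>v\<in>Y. ff x v) / (\<Prod>v\<in>X - {x}. ff x v)"
    proof -
      have "real (hook_product lam) / real (hook_product lamp) = (1 / real x) * ((\<Prod>q\<in>Q - Suc ` Q. ff x q) / (\<Prod>q\<in>Suc ` Q - Q. ff x q))"
        unfolding HH R1 R2 ..
      then have h2: "real (hook_product lam) / real (hook_product lamp) = (1 / real x) * ((\<Prod>v\<in>Y. ff x v) / (\<Prod>v\<in>X - {x}. ff x v))"
        unfolding s1 s2 .
      have rx: "real x = 1" using x1 by simp
      show ?thesis unfolding h2 rx by (simp only: div_by_1 mult_1_left)
    qed
    have e1: "{1..ncorners lam} = {0..ncorners lam} - {i}" using i by auto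
    have e2: "xcont lam 0 = xcont lam i" using i by simp
    show "real (hook_product lam) / real (hook_product lamp) =
             (\<Prod>j\<in>{1..ncorners lam}.
                 (of_int (xcont lam 0) gchoose 2) - (of_int (ycont lam j) gchoose 2))
           / (\<Prod>j\<in>{1..ncorners lam}.
                 (of_int (xcont lam 0) gchoose 2) - (of_int (xcont lam j) gchoose 2))"
      unfolding e2 phi_def[symmetric] PY
      unfolding e1 PX by (rule main)
  next
    assume i: "1 \<le> i"
    then have x1: "x \<noteq> 1" using i0 by auto
    then have a1: "a \<ge> 1" and aP': "a \<in> P" using aP unfolding x_def by auto
    have xs: "x = Suc a" unfolding x_def by simp
    have xS: "Suc a \<notin> P" using xP unfolding xs .
    have finX: "finite X" unfolding X_def by simp
    have finY: "finite Y" unfolding Y_def by simp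
    have key: "(\<Prod>q\<in>Q - Suc ` Q. ff x q) / (\<Prod>q\<in>Suc ` Q - Q. ff x q)
        = (\<Prod>v\<in>Y. ff x v) / (ff x a * (\<Prod>v\<in>X - {1, x}. ff x v))"
    proof (cases "a - 1 \<in> P")
      case True
      have s1: "Q - Suc ` Q = Y"
        unfolding Q_def Yc by (rule setC[OF P0 aP' xS True])
      have s2: "Suc ` Q - Q = insert a (X - {1, x})"
        unfolding Q_def Xc xs by (rule setD[OF P0 aP' xS True])
      have "a \<notin> X - {1, x}" unfolding Xc using aP' by (auto simp: mem_Suc_image)
      then have "(\<Prod>v\<in>insert a (X - {1, x}). ff x v) = ff x a * (\<Prod>v\<in>X - {1, x}. ff x v)"
        using finX by (intro prod.insert) auto
      then show ?thesis unfolding s1 s2 by (rule arg_cong)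
    next
      case False
      have aY: "a \<in> Y" unfolding Yc using False aP' by auto
      have s1: "Q - Suc ` Q = Y - {a}"
        unfolding Q_def Yc by (rule setE[OF P0 aP' xS False])
      have s2: "Suc ` Q - Q = X - {1, x}"
        unfolding Q_def Xc xs by (rule setF[OF P0 aP' xS False])
      have eY: "(\<Prod>v\<in>Y. ff x v) = ff x a * (\<Prod>v\<in>Y - {a}. ff x v)"
        using finY aY by (rule prod.remove)
      have nz: "ff x a \<noteq> 0" using a1 ff_nz[of a x] unfolding x_def by auto
      define A where "A = (\<Prod>v\<in>Y - {a}. ff x v)"
      define B where "B = (\<Prod>v\<in>X - {1, x}. ff x v)"
      have "A / B = (ff x a * A) / (ff x a * B)" using nz by simp
      then show ?thesis unfolding s1 s2 eY A_def B_def .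
    qed
    have split: "(\<Prod>v\<in>X - {x}. ff x v) = ff x 1 * (\<Prod>v\<in>X - {1, x}. ff x v)"
    proof -
      have "1 \<in> X - {x}" using one_X x1 by auto
      then have "(\<Prod>v\<in>X - {x}. ff x v) = ff x 1 * (\<Prod>v\<in>X - {x} - {1}. ff x v)"
        using finX by (intro prod.remove) auto
      moreover have "X - {x} - {1} = X - {1, x}" by auto
      ultimately show ?thesis by simp
    qed
    have fa: "ff x a = real a" unfolding ff_eq x_def by (simp add: field_simps)
    have f1: "ff x 1 = real a * (real a + 1) / 2" unfolding ff_eq x_def by (simp add: field_simps)
    have rx: "real x = real a + 1" unfolding x_def by simp
    have Bn: "(\<Prod>v\<in>X - {1, x}. ff x v) \<noteq> 0" by (rule Xnz) auto
    have main: "real (hook_product lam) / real (hook_product lamp) = 1 / 2 * ((\<Prod>v\<in>Y. ff x v) / (\<Prod>v\<in>X - {x}. ff x v))"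
    proof -
      define A where "A = (\<Prod>v\<in>Y. ff x v)"
      define B where "B = (\<Prod>v\<in>X - {1, x}. ff x v)"
      have Bn': "B \<noteq> 0" using Bn unfolding B_def .
      have "real (hook_product lam) / real (hook_product lamp)
         = (1 / real x) * ((\<Prod>v\<in>Y. ff x v) / (ff x a * (\<Prod>v\<in>X - {1, x}. ff x v)))"
        unfolding HH R1 R2 key ..
      also have "\<dots> = (1 / (real a + 1)) * (A / (real a * B))" unfolding rx fa A_def B_def ..
      also have "\<dots> = 1 / 2 * (A / (real a * (real a + 1) / 2 * B))"
        using a1 Bn' by (simp add: field_simps)
      also have "\<dots> = 1 / 2 * ((\<Prod>v\<in>Y. ff x v) / (\<Prod>v\<in>X - {x}. ff x v))"
        unfolding split f1 A_def B_def ..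
      finally show ?thesis .
    qed
    show "real (hook_product lam) / real (hook_product lamp) =
             1 / 2 * ((\<Prod>j\<in>{1..ncorners lam}.
                 (of_int (xcont lam i) gchoose 2) - (of_int (ycont lam j) gchoose 2))
           / (\<Prod>j\<in>{0..ncorners lam} - {i}.
                 (of_int (xcont lam i) gchoose 2) - (of_int (xcont lam j) gchoose 2)))"
      unfolding phi_def[symmetric] PY PX by (rule main)
  qed
qed


end
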